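(* Let $\mathbb{C}[X]^*$ be the linear dual of the polynomial algebra $\mathbb{C}[X]$, endowed with the convolution product $(f*g)(X^n)=\sum_{k=0}^n\binom{n}{k}f(X^k)g(X^{n-k})$ for $n\geq 0$ (unit $\varepsilon$ with $\varepsilon(X^n)=\delta_{n,0}$), and let $\mathbb{C}[X]^{\circ}\subseteq\mathbb{C}[X]^*$ be the subalgebra of linear forms vanishing on some non-zero ideal of $\mathbb{C}[X]$. Let $J=\{f\in\mathbb{C}[X]^{\circ}\mid f(1)=0\}$. Let $\xi\in\mathbb{C}[X]^*$ be defined by $\xi(X^n)=\delta_{n,1}$, for $\lambda\in\mathbb{C}$ let $\phi_\lambda:\mathbb{C}[X]\to\mathbb{C}$ be the algebra map with $\phi_\lambda(X)=\lambda$, let $G_a=\{\phi_\lambda\mid\lambda\in\mathbb{C}\}$ (a group under convolution, $\phi_\lambda*\phi_\mu=\phi_{\lambda+\mu}$, identity $\phi_0=\varepsilon$), let $\mathbb{C}G_a$ be its group algebra with counit $\varepsilon_a(\phi_\lambda)=1$, and let $\Psi:\mathbb{C}[\xi]\otimes\mathbb{C}G_a\to\mathbb{C}[X]^{\circ}$, $\xi^n\otimes\phi_\lambda\mapsto\xi^n*\phi_\lambda$, be the (Hopf) algebra isomorphism. Then $\Psi$ induces an isomorphism of vector spaces $$\mathbb{C}\bar{\xi}\oplus\frac{\ker(\varepsilon_a)}{\ker(\varepsilon_a)^2}\cong\frac{J}{J^2},$$ where $\bar\xi=\xi+\langle\xi^2\rangle\in\langle\xi\rangle/\langle\xi^2\rangle$;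 explicitly it sends $\bar\xi\mapsto \xi+J^2$ and $x+\ker(\varepsilon_a)^2\mapsto \Psi(1\otimes x)+J^2$.
   Context: $\mathbb{C}[X]$ is the Hopf algebra with $\Delta(X)=X\otimes 1+1\otimes X$, $\varepsilon(X)=0$, $S(X)=-X$. The map $\Psi$ is known to be an isomorphism of Hopf algebras; $\mathbb{C}[\xi]$ is a polynomial algebra in $\xi$ with counit $\varepsilon_\xi(\xi)=0$, and the augmentation of $\mathbb{C}[X]^\circ$ (evaluation at $1$) corresponds under $\Psi$ to $\varepsilon_\xi\otimes\varepsilon_a$. *)

theory Defs
  imports Complex_Main "HOL-Computational_Algebra.Polynomial"
begin

text \<open>Linear forms on C[X] are identified with their values on the monomial basis:
  f :: nat => complex, f n = f(X^n).\<close>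

type_synonym dual = "nat \<Rightarrow> complex"

definition pairing :: "dual \<Rightarrow> complex poly \<Rightarrow> complex" where
  "pairing f q = (\<Sum>i\<le>degree q. coeff q i * f i)"

definition conv :: "dual \<Rightarrow> dual \<Rightarrow> dual" where
  "conv f g = (\<lambda>n. \<Sum>k\<le>n. of_nat (n choose k) * f k * g (n - k))"

definition eps :: dual where
  "eps = (\<lambda>n. if n = 0 then 1 else 0)"

fun conv_pow :: "dual \<Rightarrow> nat \<Rightarrow> dual" where
  "conv_pow f 0 = eps"
| "conv_pow f (Suc k) = conv f (conv_pow f k)"

definition poly_ideal :: "complex poly set \<Rightarrow> bool" where
  "poly_ideal I \<longleftrightarrow> 0 \<in> I \<and> (\<forall>a\<in>I. \<forall>b\<in>I. a + b \<in> I) \<and> (\<forall>a\<in>I. \<forall>q. q * a \<in> I)"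

definition sweedler :: "dual set" where
  "sweedler = {f. \<exists>I. poly_ideal I \<and> I \<noteq> {0} \<and> (\<forall>q\<in>I. pairing f q = 0)}"

definition J :: "dual set" where
  "J = {f \<in> sweedler. f 0 = 0}"

definition cspan :: "('a \<Rightarrow> complex) set \<Rightarrow> ('a \<Rightarrow> complex) set" where
  "cspan S = {y. \<exists>m (c :: nat \<Rightarrow> complex) v. (\<forall>i<m. v i \<in> S) \<and>
                  y = (\<lambda>t. \<Sum>i<m. c i * v i t)}"

definition J2 :: "dual set" where
  "J2 = cspan {conv f g | f g. f \<in> J \<and> g \<in> J}"

definition xi :: dual where
  "xi = (\<lambda>n. if n = 1 then 1 else 0)"

text \<open>phi lambda: algebra map C[X] -> C with X |-> lambda, so phi lambda (X^n) = lambda^n.\<close>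
definition phi :: "complex \<Rightarrow> dual" where
  "phi l = (\<lambda>n. l ^ n)"

text \<open>Group algebra C G_a: finitely supported functions on G_a (indexed by lambda in C),
  x = sum_lambda x(lambda) phi_lambda.\<close>
definition supp :: "('a \<Rightarrow> complex) \<Rightarrow> 'a set" where
  "supp x = {a. x a \<noteq> 0}"

definition grp_alg :: "(complex \<Rightarrow> complex) set" where
  "grp_alg = {x. finite (supp x)}"

definition ga_mult :: "(complex \<Rightarrow> complex) \<Rightarrow> (complex \<Rightarrow> complex) \<Rightarrow> (complex \<Rightarrow> complex)" where
  "ga_mult x y = (\<lambda>m. \<Sum>l\<in>supp x. x l * y (m - l))"

definition eps_a :: "(complex \<Rightarrow> complex) \<Rightarrow> complex" where
  "eps_a x = (\<Sum>l\<in>supp x. x l)"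

definition ker_a :: "(complex \<Rightarrow> complex) set" where
  "ker_a = {x \<in> grp_alg. eps_a x = 0}"

definition ker_a2 :: "(complex \<Rightarrow> complex) set" where
  "ker_a2 = cspan {ga_mult x y | x y. x \<in> ker_a \<and> y \<in> ker_a}"

text \<open>C[xi] (x) C G_a, with basis xi^n (x) phi_lambda indexed by (n, lambda):
  finitely supported functions nat * complex => complex.\<close>
definition Psi :: "(nat \<times> complex \<Rightarrow> complex) \<Rightarrow> dual" where
  "Psi t = (\<lambda>n. \<Sum>p\<in>supp t. t p * conv (conv_pow xi (fst p)) (phi (snd p)) n)"

definition one_tensor :: "(complex \<Rightarrow> complex) \<Rightarrow> (nat \<times> complex \<Rightarrow> complex)" where
  "one_tensor x = (\<lambda>(k, l). if k = 0 then x l else 0)"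

text \<open>The induced map on representatives: (c, x) |-> c xi + Psi(1 (x) x).\<close>
definition Theta :: "complex \<Rightarrow> (complex \<Rightarrow> complex) \<Rightarrow> dual" where
  "Theta c x = (\<lambda>n. c * xi n + Psi (one_tensor x) n)"

end

theory Submission
  imports Defs "HOL-Computational_Algebra.Polynomial_FPS" "HOL-Computational_Algebra.Fundamental_Theorem_Algebra"
begin
unbundle fps_syntax

definition E :: "dual \<Rightarrow> complex fps" where
  "E f = Abs_fps (\<lambda>n. f n / fact n)"

definition Einv :: "complex fps \<Rightarrow> dual" where
  "Einv F = (\<lambda>n. fact n * (F $ n))"

lemma E_nth[simp]: "E f $ n = f n / fact n"
  by (simp add: E_def)

lemma Einv_E[simp]: "Einv (E f) = f"
  by (simp add: Einv_def E_def)

lemma E_Einv[simp]: "E (Einv F) = F"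
  by (rule fps_ext) (simp add: Einv_def)

lemma E_inj: "E f = E g \<Longrightarrow> f = g"
  by (metis Einv_E)

lemma E_conv: "E (conv f g) = E f * E g"
proof (rule fps_ext)
  fix n
  have "(E f * E g) $ n = (\<Sum>i=0..n. f i / fact i * (g (n - i) / fact (n - i)))"
    by (simp add: fps_mult_nth)
  also have "\<dots> = (\<Sum>k\<le>n. of_nat (n choose k) * f k * g (n - k)) / fact n"
    unfolding sum_divide_distrib atLeast0AtMost
  proof (rule sum.cong[OF refl])
    fix k assume "k \<in> {..n}"
    then have kn: "k \<le> n" by simp
    show "f k / fact k * (g (n - k) / fact (n - k)) = of_nat (n choose k) * f k * g (n - k) / fact n"
      by (simp add: binomial_fact[OF kn] field_simps)
  qed
  finally show "E (conv f g) $ n = (E f * E g) $ n" by (simp add: conv_def)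
qed

lemma E_eps: "E eps = 1"
  by (rule fps_ext) (simp add: eps_def)

lemma E_xi: "E xi = fps_X"
  by (rule fps_ext) (simp add: xi_def fps_X_def)

lemma E_phi: "E (phi l) = fps_exp l"
  by (rule fps_ext) (simp add: phi_def)

lemma E_conv_pow_xi: "E (conv_pow xi k) = fps_X ^ k"
  by (induction k) (simp_all add: E_conv E_eps E_xi)

lemma conv_eps: "conv eps f = f"
  by (rule E_inj) (simp add: E_conv E_eps)

lemma E_lin: "E (\<lambda>n. f n + g n) = E f + E g"
  by (rule fps_ext) (simp add: add_divide_distrib)
lemma E_diff: "E (\<lambda>n. f n - g n) = E f - E g"
  by (rule fps_ext) (simp add: diff_divide_distrib)
lemma E_scale: "E (\<lambda>n. c * f n) = fps_const c * E f"
  by (rule fps_ext) simp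
lemma E_sum: "E (\<lambda>n. \<Sum>i\<in>S. f i n) = (\<Sum>i\<in>S. E (f i))"
  by (rule fps_ext) (simp add: fps_sum_nth sum_divide_distrib)
lemma E_zero: "E (\<lambda>n. 0) = 0"
  by (rule fps_ext) simp

lemma E_shift: "E (\<lambda>n. f (Suc n)) = fps_deriv (E f)"
proof (rule fps_ext)
  fix n
  have nz: "(fact n :: complex) * (1 + of_nat n) \<noteq> 0"
    by (metis add.commute fact_nonzero mult_eq_0_iff of_nat_Suc of_nat_eq_0_iff nat.distinct(1))
  have "fps_deriv (E f) $ n = of_nat (Suc n) * (f (Suc n) / (fact n * (1 + of_nat n)))"
    by (simp add: fact_Suc algebra_simps)
  also have "\<dots> = f (Suc n) / fact n" using nz by (simp add: field_simps)
  finally show "E (\<lambda>n. f (Suc n)) $ n = fps_deriv (E f) $ n" by simp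
qed


type_synonym rep = "(complex \<times> nat \<times> complex) list"

definition tm :: "complex \<times> nat \<times> complex \<Rightarrow> complex fps" where
  "tm = (\<lambda>(c,k,m). fps_const c * fps_X ^ k * fps_exp m)"

definition val :: "rep \<Rightarrow> complex fps" where
  "val xs = sum_list (map tm xs)"

definition mul1 :: "complex \<times> nat \<times> complex \<Rightarrow> complex \<times> nat \<times> complex \<Rightarrow> complex \<times> nat \<times> complex" where
  "mul1 = (\<lambda>(c,k,m) (c',k',m'). (c*c', k+k', m+m'))"

definition rprod :: "rep \<Rightarrow> rep \<Rightarrow> rep" where
  "rprod xs ys = concat (map (\<lambda>x. map (mul1 x) ys) xs)"

definition rscale :: "complex \<Rightarrow> rep \<Rightarrow> rep" where
  "rscale a xs = map (\<lambda>(c,k,m). (a*c,k,m)) xs"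

lemma val_Nil[simp]: "val [] = 0" by (simp add: val_def)
lemma val_Cons[simp]: "val (x#xs) = tm x + val xs" by (simp add: val_def)
lemma val_append[simp]: "val (xs @ ys) = val xs + val ys" by (simp add: val_def)

lemma tm_mul1: "tm (mul1 x y) = tm x * tm y"
  by (cases x; cases y) (simp add: tm_def mul1_def fps_exp_add_mult power_add fps_const_mult[symmetric] algebra_simps del: fps_const_mult)

lemma val_map_mul1: "val (map (mul1 x) ys) = tm x * val ys"
  by (induction ys) (simp_all add: tm_mul1 algebra_simps)

lemma val_rprod: "val (rprod xs ys) = val xs * val ys"
  by (induction xs) (simp_all add: rprod_def val_map_mul1 algebra_simps)

lemma val_rscale: "val (rscale a xs) = fps_const a * val xs"
  by (induction xs) (auto simp: rscale_def tm_def algebra_simps fps_const_mult[symmetric] simp del: fps_const_mult)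

definition QP :: "complex fps \<Rightarrow> bool" where
  "QP F \<longleftrightarrow> (\<exists>xs. F = val xs)"

lemma QP_0: "QP 0" unfolding QP_def by (rule exI[of _ "[]"]) simp
lemma QP_add: "QP F \<Longrightarrow> QP G \<Longrightarrow> QP (F + G)"
  unfolding QP_def by (metis val_append)
lemma QP_mult: "QP F \<Longrightarrow> QP G \<Longrightarrow> QP (F * G)"
  unfolding QP_def by (metis val_rprod)
lemma QP_scale: "QP F \<Longrightarrow> QP (fps_const a * F)"
  unfolding QP_def by (metis val_rscale)
lemma QP_uminus: "QP F \<Longrightarrow> QP (- F)"
  using QP_scale[of F "-1"] by (simp add: fps_const_neg[symmetric] del: fps_const_neg)
lemma QP_diff: "QP F \<Longrightarrow> QP G \<Longrightarrow> QP (F - G)"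
  using QP_add QP_uminus by (metis diff_conv_add_uminus)
lemma QP_tm: "QP (fps_const c * fps_X ^ k * fps_exp m)"
  unfolding QP_def by (rule exI[of _ "[(c,k,m)]"]) (simp add: tm_def)
lemma QP_basis: "QP (fps_X ^ k * fps_exp m)"
  using QP_tm[of 1 k m] by simp
lemma QP_exp: "QP (fps_exp m)"
  using QP_basis[of 0 m] by simp
lemma QP_X: "QP fps_X"
  using QP_basis[of 1 0] by simp
lemma QP_1: "QP 1"
  using QP_basis[of 0 0] by simp
lemma QP_sum: "finite S \<Longrightarrow> (\<And>i. i \<in> S \<Longrightarrow> QP (f i)) \<Longrightarrow> QP (\<Sum>i\<in>S. f i)"
  by (induction S rule: finite_induct) (auto intro: QP_0 QP_add)


definition Lop :: "complex \<Rightarrow> complex fps \<Rightarrow> complex fps" where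
  "Lop a F = fps_deriv F - fps_const a * F"

definition Tc :: "complex \<Rightarrow> complex poly \<Rightarrow> complex poly" where
  "Tc c p = pderiv p + smult c p"

lemma Lop_term: "Lop a (fps_of_poly p * fps_exp v) = fps_of_poly (Tc (v - a) p) * fps_exp v"
proof -
  have e: "fps_const (v - a) = fps_const v - fps_const a" by simp
  show ?thesis
    by (simp add: e Lop_def Tc_def fps_deriv_mult fps_of_poly_pderiv fps_of_poly_add fps_of_poly_smult algebra_simps del: fps_const_sub)
qed

lemma Lop_sum: "Lop a (\<Sum>i\<in>S. f i) = (\<Sum>i\<in>S. Lop a (f i))"
  by (simp add: Lop_def fps_deriv_sum sum_subtractf sum_distrib_left)

lemma Lop_pow: "(Lop a ^^ n) (\<Sum>v\<in>M. fps_of_poly (p v) * fps_exp v)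
   = (\<Sum>v\<in>M. fps_of_poly ((Tc (v - a) ^^ n) (p v)) * fps_exp v)"
  by (induction n) (simp_all add: Lop_sum Lop_term)

lemma Lop_0: "Lop a 0 = 0" by (simp add: Lop_def)
lemma Lop_pow_0: "(Lop a ^^ n) 0 = 0" by (induction n) (simp_all add: Lop_0)

lemma pderiv_pow_kill: "degree p < n \<Longrightarrow> (pderiv ^^ n) (p :: complex poly) = 0"
proof (induction n arbitrary: p)
  case 0 then show ?case by simp
next
  case (Suc n)
  show ?case
  proof (cases "degree p = 0")
    case True
    then have "pderiv p = 0" by (simp add: pderiv_eq_0_iff)
    moreover have "(pderiv ^^ n) 0 = (0::complex poly)" by (induction n) (simp_all add: pderiv_0)
    ultimately show ?thesis by (simp add: funpow_Suc_right del: funpow.simps)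
  next
    case False
    then have "degree (pderiv p) < n" using Suc.prems by (simp add: degree_pderiv)
    then show ?thesis using Suc.IH by (simp add: funpow_Suc_right del: funpow.simps)
  qed
qed

lemma Tc0_pow: "(Tc 0 ^^ n) p = (pderiv ^^ n) p"
  by (induction n) (simp_all add: Tc_def)

lemma Tc_inj: assumes "c \<noteq> 0" "Tc c p = 0" shows "p = 0"
proof (rule ccontr)
  assume p: "p \<noteq> 0"
  have "coeff (pderiv p) (degree p) = 0"
    by (simp add: coeff_pderiv coeff_eq_0)
  then have "coeff (Tc c p) (degree p) = c * lead_coeff p"
    by (simp add: Tc_def)
  also have "\<dots> \<noteq> 0" using assms(1) p by simp
  finally show False using assms(2) by simp
qed

lemma Tc_pow_inj: "c \<noteq> 0 \<Longrightarrow> (Tc c ^^ n) p = 0 \<Longrightarrow> p = 0"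
  by (induction n) (auto dest: Tc_inj)

lemma LI_poly:
  fixes M :: "complex set"
  assumes "finite M"
  shows "(\<Sum>v\<in>M. fps_of_poly (p v) * fps_exp v) = 0 \<Longrightarrow> v \<in> M \<Longrightarrow> p v = 0"
  using assms
proof (induction M arbitrary: p v rule: finite_induct)
  case empty then show ?case by simp
next
  case (insert a M)
  define n where "n = Suc (degree (p a))"
  have "(Lop a ^^ n) (\<Sum>v\<in>insert a M. fps_of_poly (p v) * fps_exp v) = 0"
    using insert.prems(1) Lop_pow_0 by simp
  then have "(\<Sum>v\<in>insert a M. fps_of_poly ((Tc (v - a) ^^ n) (p v)) * fps_exp v) = 0"
    by (simp only: Lop_pow)
  moreover have "(Tc (a - a) ^^ n) (p a) = 0"
    using Tc0_pow[of n "p a"] pderiv_pow_kill[of "p a" n] by (simp add: n_def del: funpow.simps)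
  ultimately have "(\<Sum>v\<in>M. fps_of_poly ((Tc (v - a) ^^ n) (p v)) * fps_exp v) = 0"
    using insert.hyps by simp
  then have q0: "\<And>v. v \<in> M \<Longrightarrow> (Tc (v - a) ^^ n) (p v) = 0"
    using insert.IH[of "\<lambda>v. (Tc (v - a) ^^ n) (p v)"] by blast
  have pM: "\<And>v. v \<in> M \<Longrightarrow> p v = 0"
  proof -
    fix v assume "v \<in> M"
    then have "v - a \<noteq> 0" using insert.hyps by auto
    then show "p v = 0" using q0[OF \<open>v \<in> M\<close>] Tc_pow_inj by blast
  qed
  then have "(\<Sum>v\<in>M. fps_of_poly (p v) * fps_exp v) = 0" by simp
  then have "fps_of_poly (p a) * fps_exp a = 0" using insert.prems(1) insert.hyps by simp
  then have "p a = 0" by (simp add: fps_of_poly_eq_iff[of _ 0, simplified])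
  then show ?case using pM insert.prems(2) by auto
qed


definition wt :: "nat \<Rightarrow> complex \<Rightarrow> complex \<times> nat \<times> complex \<Rightarrow> complex" where
  "wt k v = (\<lambda>(c,k',m). if k' = k \<and> m = v then c else 0)"

definition coef :: "nat \<Rightarrow> complex \<Rightarrow> rep \<Rightarrow> complex" where
  "coef k v xs = sum_list (map (wt k v) xs)"

definition mus :: "rep \<Rightarrow> complex set" where
  "mus xs = (\<lambda>x. snd (snd x)) ` set xs"

definition pp :: "rep \<Rightarrow> complex \<Rightarrow> complex poly" where
  "pp xs v = sum_list (map (\<lambda>(c,k,m). if m = v then monom c k else 0) xs)"

lemma finite_mus[simp]: "finite (mus xs)" by (simp add: mus_def)
lemma mus_Cons[simp]: "mus ((c,k,m) # xs) = insert m (mus xs)" by (simp add: mus_def)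
lemma coef_Nil[simp]: "coef k v [] = 0" by (simp add: coef_def)
lemma coef_Cons[simp]: "coef k v ((c,k',m) # xs) = (if k' = k \<and> m = v then c else 0) + coef k v xs"
  by (simp add: coef_def wt_def)
lemma coef_append[simp]: "coef k v (xs @ ys) = coef k v xs + coef k v ys"
  by (simp add: coef_def)
lemma coef_rscale[simp]: "coef k v (rscale a xs) = a * coef k v xs"
  by (induction xs) (auto simp: rscale_def algebra_simps)

lemma val_pp: "finite M \<Longrightarrow> mus xs \<subseteq> M \<Longrightarrow> val xs = (\<Sum>v\<in>M. fps_of_poly (pp xs v) * fps_exp v)"
proof (induction xs)
  case Nil then show ?case by (simp add: pp_def)
next
  case (Cons x xs)
  obtain c k m where x: "x = (c,k,m)" by (cases x) auto
  have mM: "m \<in> M" and sub: "mus xs \<subseteq> M" using Cons.prems x by auto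
  have pp: "pp (x # xs) v = (if m = v then monom c k else 0) + pp xs v" for v
    by (simp add: pp_def x)
  have "(\<Sum>v\<in>M. fps_of_poly (if m = v then monom c k else 0) * fps_exp v)
      = (\<Sum>v\<in>M. if m = v then fps_of_poly (monom c k) * fps_exp v else 0)"
    by (rule sum.cong) auto
  also have "\<dots> = fps_of_poly (monom c k) * fps_exp m" using mM Cons.prems(1) by simp
  finally have t: "(\<Sum>v\<in>M. fps_of_poly (if m = v then monom c k else 0) * fps_exp v) = tm x"
    by (simp add: x tm_def fps_of_poly_monom)
  show ?case
    by (simp add: pp fps_of_poly_add distrib_right sum.distrib t Cons.IH[OF Cons.prems(1) sub])
qed

lemma coeff_pp: "coeff (pp xs v) k = coef k v xs"
  by (induction xs) (auto simp: pp_def coeff_monom)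

lemma LI_rep: assumes "val xs = 0" shows "coef k v xs = 0"
proof -
  let ?M = "insert v (mus xs)"
  have "(\<Sum>v\<in>?M. fps_of_poly (pp xs v) * fps_exp v) = 0"
    using val_pp[of ?M xs] assms by auto
  then have "pp xs v = 0" using LI_poly[of ?M "pp xs" v] by auto
  then show ?thesis using coeff_pp[of xs v k] by simp
qed

lemma coef_unique: assumes "val xs = val ys" shows "coef k v xs = coef k v ys"
proof -
  have m1: "fps_const (-1::complex) = -1" by (metis fps_const_1_eq_1 fps_const_neg)
  have "val (xs @ rscale (-1) ys) = 0" using assms by (simp add: val_rscale m1)
  then have "coef k v (xs @ rscale (-1) ys) = 0" by (rule LI_rep)
  then show ?thesis by simp
qed

definition ell :: "rep \<Rightarrow> complex" where
  "ell xs = sum_list (map (\<lambda>(c,k,m). if k = 1 then c else 0) xs)"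
definition e0 :: "rep \<Rightarrow> complex" where
  "e0 xs = sum_list (map (\<lambda>(c,k,m). if k = 0 then c else 0) xs)"

lemma tm_0: "tm (c,k,m) $ 0 = (if k = 0 then c else 0)"
  by (cases k) (simp_all add: tm_def)

lemma e0_val: "e0 xs = val xs $ 0"
proof (induction xs)
  case Nil then show ?case by (simp add: e0_def)
next
  case (Cons x xs) then show ?case by (cases x) (simp add: e0_def tm_0)
qed

lemma group_c:
  "finite M \<Longrightarrow> mus xs \<subseteq> M \<Longrightarrow> (\<Sum>v\<in>M. coef k v xs * h v) = sum_list (map (\<lambda>(c,k',m). if k' = k then c * h m else 0) xs)"
proof (induction xs)
  case Nil then show ?case by simp
next
  case (Cons x xs)
  obtain c k' m where x: "x = (c,k',m)" by (cases x) auto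
  have mM: "m \<in> M" and sub: "mus xs \<subseteq> M" using Cons.prems x by auto
  have "(\<Sum>v\<in>M. coef k v (x # xs) * h v) = (\<Sum>v\<in>M. (if k' = k \<and> m = v then c * h v else 0)) + (\<Sum>v\<in>M. coef k v xs * h v)"
    by (simp add: x distrib_right sum.distrib if_distrib[of "\<lambda>z. z * h _"] cong: if_cong)
  also have "(\<Sum>v\<in>M. (if k' = k \<and> m = v then c * h v else 0)) = (if k' = k then c * h m else 0)"
    using mM Cons.prems(1) by (cases "k' = k") simp_all
  finally show ?case using Cons.IH[OF Cons.prems(1) sub] by (simp add: x)
qed

lemma group_f:
  "finite M \<Longrightarrow> mus xs \<subseteq> M \<Longrightarrow> (\<Sum>v\<in>M. fps_const (coef k v xs) * H v) = sum_list (map (\<lambda>(c,k',m). if k' = k then fps_const c * H m else 0) xs)"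
proof (induction xs)
  case Nil then show ?case by simp
next
  case (Cons x xs)
  obtain c k' m where x: "x = (c,k',m)" by (cases x) auto
  have mM: "m \<in> M" and sub: "mus xs \<subseteq> M" using Cons.prems x by auto
  have "(\<Sum>v\<in>M. fps_const (coef k v (x # xs)) * H v) = (\<Sum>v\<in>M. (if k' = k \<and> m = v then fps_const c * H v else 0)) + (\<Sum>v\<in>M. fps_const (coef k v xs) * H v)"
    by (simp add: x distrib_right sum.distrib fps_const_add[symmetric] if_distrib[of "\<lambda>z. fps_const z * H _"] cong: if_cong del: fps_const_add)
  also have "(\<Sum>v\<in>M. (if k' = k \<and> m = v then fps_const c * H v else 0)) = (if k' = k then fps_const c * H m else 0)"
    using mM Cons.prems(1) by (cases "k' = k") simp_all
  finally show ?case using Cons.IH[OF Cons.prems(1) sub] by (simp add: x)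
qed

lemma group_c1:
  "finite M \<Longrightarrow> mus xs \<subseteq> M \<Longrightarrow> (\<Sum>v\<in>M. coef k v xs) = sum_list (map (\<lambda>(c,k',m). if k' = k then c else 0) xs)"
proof (induction xs)
  case Nil then show ?case by simp
next
  case (Cons x xs)
  obtain c k' m where x: "x = (c,k',m)" by (cases x) auto
  have mM: "m \<in> M" and sub: "mus xs \<subseteq> M" using Cons.prems x by auto
  have "(\<Sum>v\<in>M. coef k v (x # xs)) = (\<Sum>v\<in>M. (if k' = k \<and> m = v then c else 0)) + (\<Sum>v\<in>M. coef k v xs)"
    by (simp add: x sum.distrib)
  also have "(\<Sum>v\<in>M. (if k' = k \<and> m = v then c else 0)) = (if k' = k then c else 0)"
    using mM Cons.prems(1) by (cases "k' = k") simp_all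
  finally show ?case using Cons.IH[OF Cons.prems(1) sub] by (simp add: x)
qed

lemma ell_sum: "finite M \<Longrightarrow> mus xs \<subseteq> M \<Longrightarrow> ell xs = (\<Sum>v\<in>M. coef 1 v xs)"
  using group_c1[of M xs 1] by (simp add: ell_def)

lemma ell_unique: assumes "val xs = val ys" shows "ell xs = ell ys"
  using ell_sum[of "mus xs \<union> mus ys" xs] ell_sum[of "mus xs \<union> mus ys" ys] coef_unique[OF assms]
  by simp

lemma ell_Cons[simp]: "ell ((c,k,m) # xs) = (if k = 1 then c else 0) + ell xs"
  by (simp add: ell_def)
lemma e0_Cons[simp]: "e0 ((c,k,m) # xs) = (if k = 0 then c else 0) + e0 xs"
  by (simp add: e0_def)
lemma ell_Nil[simp]: "ell [] = 0" by (simp add: ell_def)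
lemma e0_Nil[simp]: "e0 [] = 0" by (simp add: e0_def)
lemma ell_append[simp]: "ell (xs @ ys) = ell xs + ell ys" by (simp add: ell_def)
lemma ell_rscale[simp]: "ell (rscale a xs) = a * ell xs"
  by (induction xs) (auto simp: rscale_def algebra_simps)

lemma ell_mul1: "ell (map (mul1 (c,k,m)) ys) = (if k = 0 then c * ell ys else if k = 1 then c * e0 ys else 0)"
  by (induction ys) (auto simp: mul1_def algebra_simps)

lemma ell_rprod: "ell (rprod xs ys) = ell xs * e0 ys + e0 xs * ell ys"
proof (induction xs)
  case Nil then show ?case by (simp add: rprod_def)
next
  case (Cons x xs)
  obtain c k m where x: "x = (c,k,m)" by (cases x) auto
  have "rprod (x # xs) ys = map (mul1 x) ys @ rprod xs ys" by (simp add: rprod_def)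
  then show ?case using Cons.IH by (simp add: x ell_mul1 algebra_simps)
qed

definition rpi :: "rep \<Rightarrow> complex \<Rightarrow> complex" where
  "rpi xs = (\<lambda>v. coef 0 v xs)"

lemma supp_rpi: "supp (rpi xs) \<subseteq> mus xs"
proof
  fix v assume "v \<in> supp (rpi xs)"
  then have "coef 0 v xs \<noteq> 0" by (simp add: supp_def rpi_def)
  then show "v \<in> mus xs"
    by (induction xs) (auto split: if_splits)
qed

lemma rpi_grp: "rpi xs \<in> grp_alg"
  using supp_rpi finite_subset finite_mus unfolding grp_alg_def by blast

lemma sum_supp_ext:
  assumes "finite T" "supp x \<subseteq> T"
  shows "(\<Sum>l\<in>supp x. x l * h l) = (\<Sum>l\<in>T. x l * h l)"
  by (rule sum.mono_neutral_left) (use assms in \<open>auto simp: supp_def\<close>)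

lemma sum_supp_ext_f:
  assumes "finite T" "supp x \<subseteq> T"
  shows "(\<Sum>l\<in>supp x. fps_const (x l) * H l) = (\<Sum>l\<in>T. fps_const (x l) * H l)"
  by (rule sum.mono_neutral_left) (use assms in \<open>auto simp: supp_def\<close>)

lemma eps_a_rpi: "eps_a (rpi xs) = e0 xs"
proof -
  have "eps_a (rpi xs) = (\<Sum>l\<in>supp (rpi xs). rpi xs l * 1)" by (simp add: eps_a_def)
  also have "\<dots> = (\<Sum>l\<in>mus xs. coef 0 l xs * 1)"
    using sum_supp_ext[OF finite_mus supp_rpi, where h="\<lambda>_. 1"] by (simp add: rpi_def)
  also have "\<dots> = e0 xs" using group_c1[of "mus xs" xs 0] by (simp add: e0_def)
  finally show ?thesis .
qed

lemma coef_mul1: "coef 0 v (map (mul1 (c,k,m)) ys) = (if k = 0 then c * coef 0 (v - m) ys else 0)"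
  by (induction ys) (auto simp: mul1_def algebra_simps)

lemma rpi_rprod: "rpi (rprod xs ys) = ga_mult (rpi xs) (rpi ys)"
proof
  fix v
  have "ga_mult (rpi xs) (rpi ys) v = (\<Sum>l\<in>supp (rpi xs). rpi xs l * coef 0 (v - l) ys)"
    by (simp add: ga_mult_def rpi_def)
  also have "\<dots> = (\<Sum>l\<in>mus xs. coef 0 l xs * coef 0 (v - l) ys)"
    using sum_supp_ext[OF finite_mus supp_rpi] by (simp add: rpi_def)
  also have "\<dots> = sum_list (map (\<lambda>(c,k',m). if k' = 0 then c * coef 0 (v - m) ys else 0) xs)"
    by (rule group_c) auto
  also have "\<dots> = coef 0 v (rprod xs ys)"
  proof (induction xs)
    case Nil then show ?case by (simp add: rprod_def)
  next
    case (Cons x xs)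
    obtain c k m where x: "x = (c,k,m)" by (cases x) auto
    have "rprod (x # xs) ys = map (mul1 x) ys @ rprod xs ys" by (simp add: rprod_def)
    then show ?case using Cons.IH by (simp add: x coef_mul1)
  qed
  finally show "rpi (rprod xs ys) v = ga_mult (rpi xs) (rpi ys) v" by (simp add: rpi_def)
qed


lemma pairing_ext: "degree q \<le> N \<Longrightarrow> pairing f q = (\<Sum>i\<le>N. coeff q i * f i)"
  unfolding pairing_def
  by (rule sum.mono_neutral_left) (auto simp: coeff_eq_0)

lemma pairing_add: "pairing f (p + q) = pairing f p + pairing f q"
proof -
  let ?N = "max (degree p) (degree q)"
  have "degree (p + q) \<le> ?N" by (rule degree_add_le) auto
  then show ?thesis
    by (simp add: pairing_ext[of _ ?N] distrib_right sum.distrib)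
qed

lemma pairing_smult: "pairing f (smult a p) = a * pairing f p"
  by (simp add: pairing_ext[of _ "degree p"] sum_distrib_left algebra_simps)

lemma pairing_pCons0: "pairing f (pCons 0 q) = pairing (\<lambda>n. f (Suc n)) q"
proof -
  have "degree (pCons 0 q) \<le> Suc (degree q)" by (simp add: degree_pCons_le)
  then have "pairing f (pCons 0 q) = (\<Sum>i\<le>Suc (degree q). coeff (pCons 0 q) i * f i)"
    by (rule pairing_ext)
  also have "\<dots> = (\<Sum>i\<le>degree q. coeff q i * f (Suc i))"
    by (subst sum.atMost_Suc_shift) simp
  finally show ?thesis by (simp add: pairing_def)
qed

lemma pairing_lin: "pairing (\<lambda>n. a * f n + b * g n) q = a * pairing f q + b * pairing g q"
  by (simp add: pairing_def sum.distrib sum_distrib_left algebra_simps)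

lemma pairing_shift: "pairing f (r * [:-m, 1:]) = pairing (\<lambda>n. f (Suc n) - m * f n) r"
proof -
  have e: "r * [:-m, 1:] = pCons 0 r + smult (-m) r"
    by (simp add: mult_pCons_right)
  have "pairing f (r * [:-m, 1:]) = pairing f (pCons 0 r) + pairing f (smult (-m) r)"
    by (simp only: e pairing_add)
  then have "pairing f (r * [:-m, 1:]) = pairing (\<lambda>n. f (Suc n)) r - m * pairing f r"
    by (simp only: pairing_smult pairing_pCons0) simp
  also have "\<dots> = pairing (\<lambda>n. 1 * f (Suc n) + (-m) * f n) r"
    by (simp only: pairing_lin) simp
  finally show ?thesis by simp
qed

definition ann :: "complex poly \<Rightarrow> dual \<Rightarrow> bool" where
  "ann q f \<longleftrightarrow> (\<forall>r. pairing f (r * q) = 0)"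

lemma ann_shift_iff: "ann ([:-m, 1:] * q) f \<longleftrightarrow> ann q (\<lambda>n. f (Suc n) - m * f n)"
  unfolding ann_def
  by (metis (no_types, lifting) mult.assoc mult.commute pairing_shift)

lemma ann_mult: "ann q f \<Longrightarrow> ann (p * q) f"
  unfolding ann_def by (metis mult.assoc)

lemma ann_add: "ann q f \<Longrightarrow> ann q g \<Longrightarrow> ann q (\<lambda>n. f n + g n)"
  unfolding ann_def using pairing_lin[of 1 f 1 g] by simp

lemma ann_zero: "ann q (\<lambda>n. 0)"
  unfolding ann_def pairing_def by simp

lemma ann_sweedler: assumes "q \<noteq> 0" "ann q f" shows "f \<in> sweedler"
proof -
  let ?I = "{r * q | r. True}"
  have "poly_ideal ?I"
    unfolding poly_ideal_def
  proof (intro conjI ballI allI)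
    show "0 \<in> ?I" by (metis (mono_tags, lifting) mem_Collect_eq mult_zero_left)
  next
    fix a b assume "a \<in> ?I" "b \<in> ?I"
    then show "a + b \<in> ?I" by (auto simp: distrib_right[symmetric])
  next
    fix a p assume "a \<in> ?I"
    then show "p * a \<in> ?I" by (auto simp: mult.assoc[symmetric])
  qed
  moreover have "q \<in> ?I" by (metis (mono_tags, lifting) mem_Collect_eq mult_1)
  then have "?I \<noteq> {0}" using assms(1) by auto
  moreover have "\<forall>p\<in>?I. pairing f p = 0" using assms(2) by (auto simp: ann_def)
  ultimately show ?thesis unfolding sweedler_def by blast
qed

lemma sweedler_ann: assumes "f \<in> sweedler" shows "\<exists>q. q \<noteq> 0 \<and> ann q f"
proof -
  obtain I where I: "poly_ideal I" "I \<noteq> {0}" "\<forall>q\<in>I. pairing f q = 0"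
    using assms by (auto simp: sweedler_def)
  have "0 \<in> I" using I(1) by (simp add: poly_ideal_def)
  then obtain q where q: "q \<in> I" "q \<noteq> 0" using I(2) by blast
  have "ann q f" unfolding ann_def using I q by (auto simp: poly_ideal_def)
  then show ?thesis using q by blast
qed

lemma Einv_add: "Einv (F + G) = (\<lambda>n. Einv F n + Einv G n)"
  by (simp add: Einv_def fun_eq_iff algebra_simps)
lemma Einv_0: "Einv 0 = (\<lambda>n. 0)"
  by (simp add: Einv_def)

lemma Einv_Lop: "(\<lambda>n. Einv F (Suc n) - m * Einv F n) = Einv (Lop m F)"
proof -
  have "E (\<lambda>n. Einv F (Suc n) - m * Einv F n) = Lop m F"
    using E_diff[of "\<lambda>n. Einv F (Suc n)" "\<lambda>n. m * Einv F n"] E_shift[of "Einv F"] E_scale[of m "Einv F"]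
    by (simp add: Lop_def)
  then show ?thesis by (metis Einv_E)
qed

lemma ann_term: "ann ([:-m, 1:] ^ Suc k) (Einv (fps_of_poly (monom c k) * fps_exp m))"
proof (induction k arbitrary: c)
  case 0
  have "Lop m (fps_of_poly (monom c 0) * fps_exp m) = 0"
    by (simp add: Lop_term Tc_def pderiv_monom)
  then have "ann ([:-m, 1:] * 1) (Einv (fps_of_poly (monom c 0) * fps_exp m))"
    by (simp only: ann_shift_iff Einv_Lop Einv_0 ann_zero)
  then show ?case by simp
next
  case (Suc k)
  have "Lop m (fps_of_poly (monom c (Suc k)) * fps_exp m) = fps_of_poly (monom (of_nat (Suc k) * c) k) * fps_exp m"
    by (simp add: Lop_term Tc_def pderiv_monom)
  then show ?case using Suc.IH
    by (simp only: power_Suc[of _ "Suc k"] ann_shift_iff Einv_Lop)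
qed

lemma QP_ann: assumes "QP F" shows "\<exists>q. q \<noteq> 0 \<and> ann q (Einv F)"
proof -
  obtain xs where F: "F = val xs" using assms by (auto simp: QP_def)
  have "\<exists>q. q \<noteq> 0 \<and> ann q (Einv (val xs))"
  proof (induction xs)
    case Nil then show ?case by (intro exI[of _ 1]) (simp add: Einv_0 ann_zero)
  next
    case (Cons x xs)
    obtain c k m where x: "x = (c,k,m)" by (cases x) auto
    obtain q where q: "q \<noteq> 0" "ann q (Einv (val xs))" using Cons.IH by blast
    let ?p = "[:-m, 1:] ^ Suc k"
    have "[:-m, 1:] \<noteq> 0" by simp
    then have p: "?p \<noteq> 0" by (rule power_not_zero)
    have "tm x = fps_of_poly (monom c k) * fps_exp m" by (simp add: x tm_def fps_of_poly_monom)
    then have a1: "ann (q * ?p) (Einv (tm x))" using ann_mult[OF ann_term] by simp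
    have a2: "ann (?p * q) (Einv (val xs))" using ann_mult[OF q(2)] .
    have "ann (?p * q) (Einv (val (x # xs)))"
      using ann_add[OF a1[unfolded mult.commute[of q]] a2] by (simp add: Einv_add)
    then show ?case using p q(1) by (metis mult_eq_0_iff)
  qed
  then show ?thesis using F by simp
qed

lemma QP_sweedler: "QP (E f) \<Longrightarrow> f \<in> sweedler"
  using QP_ann[of "E f"] ann_sweedler by auto


lemma deriv_Xk: "fps_deriv (fps_X ^ Suc k :: complex fps) = fps_const (of_nat (Suc k)) * fps_X ^ k"
  by (rule fps_ext) auto

lemma antideriv: "\<exists>A. QP A \<and> fps_deriv A = fps_X ^ k * fps_exp v"
proof (cases "v = 0")
  case True
  let ?A = "fps_const (1 / of_nat (Suc k)) * fps_X ^ Suc k :: complex fps"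
  have "fps_deriv ?A = fps_const (1 / of_nat (Suc k)) * fps_const (of_nat (Suc k)) * fps_X ^ k"
    using deriv_Xk[of k] by (simp only: fps_deriv_mult_const_left mult.assoc)
  also have "\<dots> = fps_X ^ k"
    by (simp add: fps_const_mult[symmetric] del: fps_const_mult of_nat_Suc)
  finally show ?thesis using True QP_scale[OF QP_basis[of "Suc k" 0]]
    by (intro exI[of _ ?A]) simp
next
  case False
  show ?thesis
  proof (induction k)
    case 0
    have "fps_deriv (fps_const (1/v) * fps_exp v) = fps_exp v"
      using False by (simp add: mult.assoc[symmetric] fps_const_mult[symmetric] del: fps_const_mult)
    then show ?case using QP_scale[OF QP_exp, of "1/v" v] by (intro exI[of _ "fps_const (1/v) * fps_exp v"]) simp
  next
    case (Suc k)
    obtain A where A: "QP A" "fps_deriv A = fps_X ^ k * fps_exp v" using Suc.IH by blast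
    let ?B = "fps_const (1/v) * (fps_X ^ Suc k * fps_exp v - fps_const (of_nat (Suc k)) * A)"
    have "QP ?B" by (intro QP_scale QP_diff QP_basis A(1))
    moreover have "fps_deriv ?B = fps_X ^ Suc k * fps_exp v"
    proof -
      have dX: "fps_deriv (fps_X ^ Suc k * fps_exp v) = fps_const (of_nat (Suc k)) * fps_X ^ k * fps_exp v + fps_X ^ Suc k * (fps_const v * fps_exp v)"
        by (simp only: fps_deriv_mult deriv_Xk fps_exp_deriv add.commute)
      have "fps_deriv ?B = fps_const (1/v) * (fps_deriv (fps_X ^ Suc k * fps_exp v) - fps_const (of_nat (Suc k)) * fps_deriv A)"
        by (simp only: fps_deriv_mult_const_left fps_deriv_sub)
      also have "\<dots> = fps_const (1/v) * (fps_const (of_nat (Suc k)) * fps_X ^ k * fps_exp v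
               + fps_X ^ Suc k * (fps_const v * fps_exp v) - fps_const (of_nat (Suc k)) * (fps_X ^ k * fps_exp v))"
        by (simp only: dX A(2))
      also have "\<dots> = fps_const (1/v) * fps_const v * (fps_X ^ Suc k * fps_exp v)"
        by (simp only: algebra_simps)
      also have "\<dots> = fps_X ^ Suc k * fps_exp v"
        using False by (simp add: fps_const_mult[symmetric] del: fps_const_mult)
      finally show ?thesis .
    qed
    ultimately show ?case by blast
  qed
qed

lemma Lop_add: "Lop l (F + G) = Lop l F + Lop l G"
  by (simp add: Lop_def algebra_simps)

lemma solve: "QP G \<Longrightarrow> \<exists>H. QP H \<and> Lop l H = G"
proof -
  assume "QP G"
  then obtain xs where G: "G = val xs" by (auto simp: QP_def)
  have "\<exists>H. QP H \<and> Lop l H = val xs"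
  proof (induction xs)
    case Nil then show ?case using QP_0 by (intro exI[of _ 0]) (simp add: Lop_def)
  next
    case (Cons x xs)
    obtain c k m where x: "x = (c,k,m)" by (cases x) auto
    obtain H where H: "QP H" "Lop l H = val xs" using Cons.IH by blast
    obtain A where A: "QP A" "fps_deriv A = fps_X ^ k * fps_exp (m - l)" using antideriv by blast
    let ?T = "fps_const c * (fps_exp l * A)"
    have "QP ?T" by (intro QP_scale QP_mult QP_exp A(1))
    moreover have "Lop l ?T = tm x"
    proof -
      have "Lop l ?T = fps_const c * (fps_exp l * fps_deriv A)"
        by (simp add: Lop_def fps_deriv_mult algebra_simps)
      also have "\<dots> = fps_const c * fps_X ^ k * (fps_exp l * fps_exp (m - l))"
        by (simp add: A(2) algebra_simps)
      also have "\<dots> = tm x" by (simp add: x tm_def fps_exp_add_mult[symmetric])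
      finally show ?thesis .
    qed
    ultimately show ?case using H by (intro exI[of _ "?T + H"]) (simp add: Lop_add QP_add)
  qed
  then show ?thesis using G by simp
qed

lemma Lop_zero: assumes "Lop l U = 0" shows "U = fps_const (U $ 0) * fps_exp l"
proof -
  let ?V = "fps_exp (-l) * U"
  have "fps_deriv ?V = fps_exp (-l) * Lop l U"
    by (simp add: fps_deriv_mult Lop_def algebra_simps fps_const_neg[symmetric] del: fps_const_neg)
  then have "fps_deriv ?V = 0" using assms by simp
  then have V: "?V = fps_const (?V $ 0)" by (rule fps_deriv_eq_0_iff[THEN iffD1])
  have V0: "?V $ 0 = U $ 0" by simp
  have "U = fps_exp l * ?V"
    by (simp add: mult.assoc[symmetric] fps_exp_add_mult[symmetric])
  also have "\<dots> = fps_const (U $ 0) * fps_exp l" using V V0 by (metis mult.commute)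
  finally show ?thesis .
qed

lemma pairing_monom: "pairing f (monom a m) = a * f m"
proof -
  have "(\<Sum>i\<le>m. coeff (monom a m) i * f i) = (\<Sum>i\<le>m. if i = m then a * f i else 0)"
    by (rule sum.cong) (auto simp: coeff_monom)
  then show ?thesis by (simp add: pairing_ext[of _ m] degree_monom_le)
qed

lemma ann_QP: "q \<noteq> 0 \<Longrightarrow> ann q f \<Longrightarrow> QP (E f)"
proof (induction "degree q" arbitrary: q f rule: less_induct)
  case less
  show ?case
  proof (cases "degree q = 0")
    case True
    then obtain c where q: "q = [:c:]" by (metis degree_eq_zeroE)
    then have c: "c \<noteq> 0" using less.prems(1) by simp
    have "f m = 0" for m
    proof -
      have "monom (1/c) m * q = monom 1 m" using c by (simp add: q mult.commute smult_monom)
      then have "pairing f (monom 1 m) = 0" using less.prems(2) unfolding ann_def by metis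
      then show ?thesis by (simp add: pairing_monom)
    qed
    then have "f = (\<lambda>n. 0)" by auto
    then show ?thesis using E_zero QP_0 by simp
  next
    case False
    then have "\<not> constant (poly q)" by (simp add: constant_degree)
    then obtain l where "poly q l = 0" using fundamental_theorem_of_algebra by blast
    then obtain q1 where q1: "q = [:-l, 1:] * q1" by (auto simp: poly_eq_0_iff_dvd elim: dvdE)
    have q1nz: "q1 \<noteq> 0" using less.prems(1) q1 by auto
    have "degree ([:-l, 1:] * q1) = degree [:-l, 1:] + degree q1" by (rule degree_mult_eq) (use q1nz in auto)
    then have "degree q = 1 + degree q1" using q1 by simp
    then have dlt: "degree q1 < degree q" by simp
    have "ann q1 (\<lambda>n. f (Suc n) - l * f n)" using less.prems(2) q1 ann_shift_iff by simp
    then have "QP (E (\<lambda>n. f (Suc n) - l * f n))" using less.hyps[OF dlt q1nz] by blast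
    moreover have "E (\<lambda>n. f (Suc n) - l * f n) = Lop l (E f)"
      using Einv_Lop[of "E f" l] by (metis Einv_E E_Einv)
    ultimately have "QP (Lop l (E f))" by simp
    then obtain H where H: "QP H" "Lop l H = Lop l (E f)" using solve by blast
    have "Lop l (E f - H) = 0" using H(2) by (simp add: Lop_def algebra_simps)
    then have "E f - H = fps_const ((E f - H) $ 0) * fps_exp l" by (rule Lop_zero)
    then have "E f = H + fps_const ((E f - H) $ 0) * fps_exp l" by (simp add: algebra_simps)
    then show ?thesis using H(1) QP_add QP_scale QP_exp by metis
  qed
qed

lemma sweedler_iff: "f \<in> sweedler \<longleftrightarrow> QP (E f)"
  using sweedler_ann ann_QP QP_sweedler by blast


definition P1 :: "(complex \<Rightarrow> complex) \<Rightarrow> dual" where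
  "P1 x = (\<lambda>n. \<Sum>l\<in>supp x. x l * l ^ n)"

lemma supp_one_tensor: "supp (one_tensor x) = (\<lambda>l. (0, l)) ` supp x"
  by (auto simp: supp_def one_tensor_def split: if_splits)

lemma Psi_one: "Psi (one_tensor x) = P1 x"
proof
  fix n
  have "Psi (one_tensor x) n = (\<Sum>l\<in>supp x. one_tensor x (0, l) * conv (conv_pow xi 0) (phi l) n)"
    unfolding Psi_def supp_one_tensor by (subst sum.reindex) (auto simp: inj_on_def)
  also have "\<dots> = P1 x n" by (simp add: P1_def one_tensor_def conv_eps phi_def)
  finally show "Psi (one_tensor x) n = P1 x n" .
qed

lemma Theta_eq: "Theta c x = (\<lambda>n. c * xi n + P1 x n)"
  by (simp add: Theta_def Psi_one)

lemma E_P1: "E (P1 x) = (\<Sum>l\<in>supp x. fps_const (x l) * fps_exp l)"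
  by (rule fps_ext) (simp add: P1_def fps_sum_nth sum_divide_distrib)

lemma E_Theta: "E (Theta c x) = fps_const c * fps_X + E (P1 x)"
proof -
  have "E (Theta c x) = E (\<lambda>n. c * xi n) + E (P1 x)" unfolding Theta_eq by (rule E_lin)
  then show ?thesis by (simp add: E_scale E_xi)
qed

lemma J_iff: "f \<in> J \<longleftrightarrow> QP (E f) \<and> E f $ 0 = 0"
  by (simp add: J_def sweedler_iff)

lemma QP_P1: "x \<in> grp_alg \<Longrightarrow> QP (E (P1 x))"
  unfolding E_P1 grp_alg_def by (auto intro!: QP_sum QP_scale QP_exp)

lemma P1_0: "P1 x 0 = eps_a x"
  by (simp add: P1_def eps_a_def)

lemma part1: "x \<in> ker_a \<Longrightarrow> Theta c x \<in> J"
proof -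
  assume x: "x \<in> ker_a"
  then have g: "x \<in> grp_alg" and e: "eps_a x = 0" by (auto simp: ker_a_def)
  have "QP (E (Theta c x))" unfolding E_Theta
    by (intro QP_add QP_scale QP_X QP_P1 g)
  moreover have "E (Theta c x) $ 0 = 0" using e by (simp add: Theta_eq xi_def P1_0)
  ultimately show ?thesis by (simp add: J_iff)
qed

lemma P1_J: "x \<in> ker_a \<Longrightarrow> P1 x \<in> J"
  using part1[of x 0] by (simp add: Theta_eq)

lemma P1_ext: "finite T \<Longrightarrow> supp x \<subseteq> T \<Longrightarrow> P1 x n = (\<Sum>l\<in>T. x l * l ^ n)"
  unfolding P1_def by (rule sum_supp_ext)

definition Lof :: "(complex \<Rightarrow> complex) \<Rightarrow> rep" where
  "Lof x = map (\<lambda>l. (x l, 0, l)) (SOME L. set L = supp x \<and> distinct L)"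

lemma Lof_list: assumes "x \<in> grp_alg"
  obtains L where "set L = supp x" "distinct L" "Lof x = map (\<lambda>l. (x l, 0, l)) L"
proof -
  have "\<exists>L. set L = supp x \<and> distinct L" using assms finite_distinct_list by (auto simp: grp_alg_def)
  define L where "L = (SOME L. set L = supp x \<and> distinct L)"
  have "set L = supp x \<and> distinct L" unfolding L_def using \<open>\<exists>L. _\<close> by (rule someI_ex)
  then show ?thesis using that[of L] by (simp add: Lof_def L_def)
qed

lemma val_Lof: assumes "x \<in> grp_alg" shows "val (Lof x) = E (P1 x)"
proof -
  obtain L where L: "set L = supp x" "distinct L" "Lof x = map (\<lambda>l. (x l, 0, l)) L"
    using Lof_list[OF assms] by blast
  have "val (map (\<lambda>l. (x l, 0, l)) L) = sum_list (map (\<lambda>l. fps_const (x l) * fps_exp l) L)"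
    by (induction L) (simp_all add: tm_def)
  also have "\<dots> = (\<Sum>l\<in>supp x. fps_const (x l) * fps_exp l)"
    using L by (simp add: sum_list_distinct_conv_sum_set)
  finally show ?thesis using L by (simp add: E_P1)
qed

lemma coef_Lof: assumes "x \<in> grp_alg" shows "coef 0 v (Lof x) = x v"
proof -
  obtain L where L: "set L = supp x" "distinct L" "Lof x = map (\<lambda>l. (x l, 0, l)) L"
    using Lof_list[OF assms] by blast
  have "coef 0 v (map (\<lambda>l. (x l, 0, l)) L) = sum_list (map (\<lambda>l. if l = v then x l else 0) L)"
    by (induction L) simp_all
  also have "\<dots> = (\<Sum>l\<in>supp x. if l = v then x l else 0)"
    using L by (simp add: sum_list_distinct_conv_sum_set)
  also have "\<dots> = x v" using assms by (auto simp: grp_alg_def supp_def)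
  finally show ?thesis using L by simp
qed

lemma rpi_Lof: "x \<in> grp_alg \<Longrightarrow> rpi (Lof x) = x"
  by (auto simp: rpi_def coef_Lof)

definition k0 :: "rep \<Rightarrow> bool" where
  "k0 xs \<longleftrightarrow> (\<forall>(c,k,m)\<in>set xs. k = 0)"

lemma k0_Lof: "x \<in> grp_alg \<Longrightarrow> k0 (Lof x)"
  by (auto simp: k0_def Lof_def)

lemma k0_rprod: "k0 xs \<Longrightarrow> k0 ys \<Longrightarrow> k0 (rprod xs ys)"
  by (fastforce simp: k0_def rprod_def mul1_def)

lemma val_k0: assumes "k0 zs" shows "val zs = E (P1 (rpi zs))"
proof -
  have "E (P1 (rpi zs)) = (\<Sum>l\<in>supp (rpi zs). fps_const (rpi zs l) * fps_exp l)" by (rule E_P1)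
  also have "\<dots> = (\<Sum>l\<in>mus zs. fps_const (coef 0 l zs) * fps_exp l)"
    using sum_supp_ext_f[OF finite_mus supp_rpi] by (simp add: rpi_def)
  also have "\<dots> = sum_list (map (\<lambda>(c,k',m). if k' = 0 then fps_const c * fps_exp m else 0) zs)"
    by (rule group_f) auto
  also have "\<dots> = val zs" using assms
    by (induction zs) (auto simp: k0_def tm_def)
  finally show ?thesis by simp
qed

lemma ga_mult_grp: "x \<in> grp_alg \<Longrightarrow> y \<in> grp_alg \<Longrightarrow> ga_mult x y \<in> grp_alg"
  by (metis rpi_Lof rpi_grp rpi_rprod)

lemma P1_ga_mult: assumes "x \<in> grp_alg" "y \<in> grp_alg"
  shows "P1 (ga_mult x y) = conv (P1 x) (P1 y)"
proof (rule E_inj)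
  let ?Z = "rprod (Lof x) (Lof y)"
  have "rpi ?Z = ga_mult x y" using assms by (simp add: rpi_rprod rpi_Lof)
  then have "E (P1 (ga_mult x y)) = val ?Z" using val_k0[of ?Z] k0_rprod k0_Lof assms by simp
  also have "\<dots> = E (P1 x) * E (P1 y)" using assms by (simp add: val_rprod val_Lof)
  finally show "E (P1 (ga_mult x y)) = E (conv (P1 x) (P1 y))" by (simp add: E_conv)
qed

lemma supp_lin: fixes m :: nat shows "supp (\<lambda>t. \<Sum>i<m. a i * w i t) \<subseteq> (\<Union>i<m. supp (w i))"
proof
  fix t assume "t \<in> supp (\<lambda>t. \<Sum>i<m. a i * w i t)"
  then have "(\<Sum>i<m. a i * w i t) \<noteq> 0" by (simp add: supp_def)
  then obtain i where "i < m" "w i t \<noteq> 0" by (metis (mono_tags, lifting) lessThan_iff mult_zero_right sum.neutral)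
  then show "t \<in> (\<Union>i<m. supp (w i))" by (auto simp: supp_def)
qed

lemma P1_lin: fixes m :: nat assumes "\<And>i. i < m \<Longrightarrow> w i \<in> grp_alg"
  shows "P1 (\<lambda>t. \<Sum>i<m. a i * w i t) = (\<lambda>n. \<Sum>i<m. a i * P1 (w i) n)"
proof
  fix n
  let ?T = "\<Union>i<m. supp (w i)"
  have fT: "finite ?T" using assms by (intro finite_UN_I) (auto simp: grp_alg_def)
  have "P1 (\<lambda>t. \<Sum>i<m. a i * w i t) n = (\<Sum>l\<in>?T. (\<Sum>i<m. a i * w i l) * l ^ n)"
    by (rule P1_ext[OF fT supp_lin])
  also have "\<dots> = (\<Sum>i<m. a i * (\<Sum>l\<in>?T. w i l * l ^ n))"
    by (simp add: sum_distrib_right sum_distrib_left sum.swap[of _ ?T] algebra_simps)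
  also have "\<dots> = (\<Sum>i<m. a i * P1 (w i) n)"
    by (rule sum.cong[OF refl]) (use fT in \<open>auto intro!: P1_ext[symmetric]\<close>)
  finally show "P1 (\<lambda>t. \<Sum>i<m. a i * w i t) n = (\<Sum>i<m. a i * P1 (w i) n)" .
qed

lemma ker_a2_grp: "x \<in> ker_a2 \<Longrightarrow> x \<in> grp_alg"
proof -
  assume "x \<in> ker_a2"
  then have "\<exists>(m::nat) a w. (\<forall>i<m. \<exists>x y. w i = ga_mult x y \<and> x \<in> ker_a \<and> y \<in> ker_a) \<and> x = (\<lambda>t. \<Sum>i<m. a i * w i t)"
    by (simp add: ker_a2_def cspan_def)
  then obtain m a w where w: "\<forall>i<(m::nat). \<exists>x y. w i = ga_mult x y \<and> x \<in> ker_a \<and> y \<in> ker_a"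
      and x: "x = (\<lambda>t. \<Sum>i<m. a i * w i t)"
    by blast
  have "\<forall>i<m. w i \<in> grp_alg" using w ga_mult_grp by (auto simp: ker_a_def)
  then have fin: "finite (\<Union>i<m. supp (w i))" by (intro finite_UN_I) (auto simp: grp_alg_def)
  show ?thesis unfolding grp_alg_def mem_Collect_eq x by (rule finite_subset[OF supp_lin fin])
qed

lemma part2b: assumes "x \<in> ker_a2" shows "Theta 0 x \<in> J2"
proof -
  have "\<exists>(m::nat) a w. (\<forall>i<m. \<exists>x y. w i = ga_mult x y \<and> x \<in> ker_a \<and> y \<in> ker_a) \<and> x = (\<lambda>t. \<Sum>i<m. a i * w i t)"
    using assms by (simp add: ker_a2_def cspan_def)
  then obtain m a w where w: "\<forall>i<(m::nat). \<exists>x y. w i = ga_mult x y \<and> x \<in> ker_a \<and> y \<in> ker_a"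
      and x: "x = (\<lambda>t. \<Sum>i<m. a i * w i t)"
    by blast
  have "\<forall>i\<in>{..<m}. \<exists>p. w i = ga_mult (fst p) (snd p) \<and> fst p \<in> ker_a \<and> snd p \<in> ker_a"
    using w by force
  then obtain p where p: "\<And>i. i < m \<Longrightarrow> w i = ga_mult (fst (p i)) (snd (p i)) \<and> fst (p i) \<in> ker_a \<and> snd (p i) \<in> ker_a"
    by (metis bchoice lessThan_iff)
  have g: "\<And>i. i < m \<Longrightarrow> w i \<in> grp_alg" using p ga_mult_grp by (auto simp: ker_a_def)
  have "Theta 0 x = P1 x" by (simp add: Theta_eq)
  also have "\<dots> = (\<lambda>n. \<Sum>i<m. a i * P1 (w i) n)" unfolding x by (rule P1_lin[OF g])
  also have "\<dots> = (\<lambda>n. \<Sum>i<m. a i * conv (P1 (fst (p i))) (P1 (snd (p i))) n)"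
    using p P1_ga_mult by (auto simp: ker_a_def intro!: sum.cong)
  finally have eq: "Theta 0 x = (\<lambda>n. \<Sum>i<m. a i * conv (P1 (fst (p i))) (P1 (snd (p i))) n)" .
  have inS: "\<forall>i<m. conv (P1 (fst (p i))) (P1 (snd (p i))) \<in> {conv f g | f g. f \<in> J \<and> g \<in> J}"
    using p P1_J by blast
  show ?thesis unfolding J2_def cspan_def eq
    by (intro CollectI exI[of _ m] exI[of _ a] exI[of _ "\<lambda>i. conv (P1 (fst (p i))) (P1 (snd (p i)))"] conjI inS refl)
qed


lemma E_lincomb: "E (\<lambda>t. \<Sum>i<m. a i * v i t) = (\<Sum>i<m. fps_const (a i) * E (v i))"
  by (simp add: E_sum E_scale)

lemma J_rep: assumes "f \<in> J" shows "\<exists>fs. E f = val fs \<and> e0 fs = 0"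
proof -
  from assms have "QP (E f)" "E f $ 0 = 0" by (auto simp: J_iff)
  then obtain fs where "E f = val fs" by (auto simp: QP_def)
  moreover have "e0 fs = 0" using \<open>E f $ 0 = 0\<close> by (simp add: e0_val calculation[symmetric])
  ultimately show ?thesis by blast
qed

definition ZZ :: "nat \<Rightarrow> (nat \<Rightarrow> complex) \<Rightarrow> (nat \<Rightarrow> rep \<times> rep) \<Rightarrow> rep" where
  "ZZ m a p = concat (map (\<lambda>i. rscale (a i) (rprod (fst (p i)) (snd (p i)))) [0..<m])"

lemma val_ZZ: "val (ZZ m a p) = (\<Sum>i<m. fps_const (a i) * (val (fst (p i)) * val (snd (p i))))"
  by (induction m) (simp_all add: ZZ_def val_rscale val_rprod)

lemma ell_ZZ: "ell (ZZ m a p) = (\<Sum>i<m. a i * (ell (fst (p i)) * e0 (snd (p i)) + e0 (fst (p i)) * ell (snd (p i))))"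
  by (induction m) (simp_all add: ZZ_def ell_rprod)

lemma coef_ZZ: "coef 0 v (ZZ m a p) = (\<Sum>i<m. a i * ga_mult (rpi (fst (p i))) (rpi (snd (p i))) v)"
proof (induction m)
  case 0 then show ?case by (simp add: ZZ_def)
next
  case (Suc m)
  have "coef 0 v (rprod (fst (p m)) (snd (p m))) = ga_mult (rpi (fst (p m))) (rpi (snd (p m))) v"
    using rpi_rprod[of "fst (p m)" "snd (p m)"] by (simp add: rpi_def fun_eq_iff)
  then show ?case using Suc.IH by (simp add: ZZ_def)
qed

lemma ell_k0: "k0 xs \<Longrightarrow> ell xs = 0"
  by (induction xs) (auto simp: k0_def)

lemma rpi_ker: "e0 xs = 0 \<Longrightarrow> rpi xs \<in> ker_a"
  by (simp add: ker_a_def rpi_grp eps_a_rpi)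

lemma part2a: assumes x: "x \<in> ker_a" and T: "Theta c x \<in> J2" shows "c = 0 \<and> x \<in> ker_a2"
proof -
  have "\<exists>(m::nat) a v. (\<forall>i<m. \<exists>f g. v i = conv f g \<and> f \<in> J \<and> g \<in> J) \<and> Theta c x = (\<lambda>t. \<Sum>i<m. a i * v i t)"
    using T by (simp add: J2_def cspan_def)
  then obtain m a v where v: "\<forall>i<(m::nat). \<exists>f g. v i = conv f g \<and> f \<in> J \<and> g \<in> J"
      and Th: "Theta c x = (\<lambda>t. \<Sum>i<m. a i * v i t)" by blast
  have "\<forall>i\<in>{..<m}. \<exists>p. E (v i) = val (fst p) * val (snd p) \<and> e0 (fst p) = 0 \<and> e0 (snd p) = 0"
  proof
    fix i assume "i \<in> {..<m}"
    then obtain f g where fg: "v i = conv f g" "f \<in> J" "g \<in> J" using v by auto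
    obtain fs gs where "E f = val fs" "e0 fs = 0" "E g = val gs" "e0 gs = 0"
      using J_rep[OF fg(2)] J_rep[OF fg(3)] by blast
    then show "\<exists>p. E (v i) = val (fst p) * val (snd p) \<and> e0 (fst p) = 0 \<and> e0 (snd p) = 0"
      using fg(1) by (intro exI[of _ "(fs, gs)"]) (simp add: E_conv)
  qed
  then obtain p where p: "\<And>i. i < m \<Longrightarrow> E (v i) = val (fst (p i)) * val (snd (p i)) \<and> e0 (fst (p i)) = 0 \<and> e0 (snd (p i)) = 0"
    by (metis bchoice lessThan_iff)
  let ?Z = "ZZ m a p"
  let ?T = "(c, 1, 0) # Lof x"
  have g: "x \<in> grp_alg" using x by (simp add: ker_a_def)
  have "val ?T = E (Theta c x)" using g by (simp add: tm_def E_Theta val_Lof)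
  also have "\<dots> = (\<Sum>i<m. fps_const (a i) * E (v i))" unfolding Th by (rule E_lincomb)
  also have "\<dots> = val ?Z" unfolding val_ZZ by (rule sum.cong) (simp_all add: p)
  finally have eqv: "val ?T = val ?Z" .
  have "c = ell ?T" using ell_k0[OF k0_Lof[OF g]] by simp
  also have "\<dots> = ell ?Z" by (rule ell_unique[OF eqv])
  also have "\<dots> = 0" unfolding ell_ZZ by (rule sum.neutral) (simp add: p)
  finally have c0: "c = 0" .
  have "x = rpi ?T" using rpi_Lof[OF g] by (simp add: rpi_def fun_eq_iff)
  also have "\<dots> = rpi ?Z" using coef_unique[OF eqv, of 0] by (simp add: rpi_def fun_eq_iff)
  also have "\<dots> = (\<lambda>t. \<Sum>i<m. a i * ga_mult (rpi (fst (p i))) (rpi (snd (p i))) t)"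
    by (simp add: rpi_def coef_ZZ fun_eq_iff)
  finally have xe: "x = (\<lambda>t. \<Sum>i<m. a i * ga_mult (rpi (fst (p i))) (rpi (snd (p i))) t)" .
  have inS: "\<forall>i<m. ga_mult (rpi (fst (p i))) (rpi (snd (p i))) \<in> {ga_mult x y | x y. x \<in> ker_a \<and> y \<in> ker_a}"
    using p rpi_ker by blast
  have "x \<in> ker_a2" unfolding ker_a2_def cspan_def xe
    by (intro CollectI exI[of _ m] exI[of _ a] exI[of _ "\<lambda>i. ga_mult (rpi (fst (p i))) (rpi (snd (p i)))"] conjI inS refl)
  with c0 show ?thesis by simp
qed

definition W :: "nat \<Rightarrow> complex \<Rightarrow> complex fps" where
  "W k m = (if 2 \<le> k then fps_X ^ (k - 1) * fps_exp m else if k = 1 then fps_exp m - 1 else 0)"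

lemma QP_W: "QP (W k m)"
  by (simp add: W_def QP_basis QP_diff QP_exp QP_1 QP_0)

lemma W_0: "W k m $ 0 = 0"
  by (simp add: W_def)

lemma W_term: "fps_const c * (fps_X * W k m) = tm (c,k,m) - (if k = 1 then fps_const c * fps_X else 0)
   - (if k = 0 then fps_const c * fps_exp m else 0)"
proof -
  consider "k = 0" | "k = 1" | "2 \<le> k" by linarith
  then show ?thesis
  proof cases
    case 1 then show ?thesis by (simp add: W_def tm_def)
  next
    case 2 then show ?thesis by (simp add: W_def tm_def algebra_simps)
  next
    case 3
    then have "fps_X * fps_X ^ (k - 1) = (fps_X ^ k :: complex fps)"
      by (metis Suc_diff_1 le_trans one_le_numeral not_one_le_zero power_Suc zero_less_iff_neq_zero)
    then show ?thesis using 3 by (simp add: W_def tm_def mult.assoc[symmetric])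
  qed
qed

lemma W_sum: "sum_list (map (\<lambda>(c,k,m). fps_const c * (fps_X * W k m)) fs)
   = val fs - fps_const (ell fs) * fps_X - sum_list (map (\<lambda>(c,k',m). if k' = 0 then fps_const c * fps_exp m else 0) fs)"
proof (induction fs)
  case Nil then show ?case by simp
next
  case (Cons x fs)
  obtain c k m where x: "x = (c,k,m)" by (cases x) auto
  let ?S = "\<lambda>fs. sum_list (map (\<lambda>(c,k',m). if k' = 0 then fps_const c * fps_exp m else (0::complex fps)) fs)"
  have "sum_list (map (\<lambda>(c,k,m). fps_const c * (fps_X * W k m)) (x # fs))
      = fps_const c * (fps_X * W k m) + sum_list (map (\<lambda>(c,k,m). fps_const c * (fps_X * W k m)) fs)"
    by (simp add: x)
  also have "\<dots> = (tm (c,k,m) - (if k = 1 then fps_const c * fps_X else 0) - (if k = 0 then fps_const c * fps_exp m else 0))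
      + (val fs - fps_const (ell fs) * fps_X - ?S fs)"
    by (simp only: W_term[of c k m] Cons.IH)
  also have "\<dots> = val (x # fs) - fps_const (ell (x # fs)) * fps_X - ?S (x # fs)"
    by (simp add: x algebra_simps)
  finally show ?case .
qed

lemma E_P1_rpi: "E (P1 (rpi zs)) = sum_list (map (\<lambda>(c,k',m). if k' = 0 then fps_const c * fps_exp m else 0) zs)"
proof -
  have "E (P1 (rpi zs)) = (\<Sum>l\<in>supp (rpi zs). fps_const (rpi zs l) * fps_exp l)" by (rule E_P1)
  also have "\<dots> = (\<Sum>l\<in>mus zs. fps_const (coef 0 l zs) * fps_exp l)"
    using sum_supp_ext_f[OF finite_mus supp_rpi] by (simp add: rpi_def)
  also have "\<dots> = sum_list (map (\<lambda>(c,k',m). if k' = 0 then fps_const c * fps_exp m else 0) zs)"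
    by (rule group_f) auto
  finally show ?thesis .
qed

lemma xi_J: "xi \<in> J"
  by (simp add: J_iff E_xi QP_X)

lemma part3: assumes "f \<in> J" shows "\<exists>c x. x \<in> ker_a \<and> (\<lambda>n. f n - Theta c x n) \<in> J2"
proof -
  obtain fs where fs: "E f = val fs" "e0 fs = 0" using J_rep[OF assms] by blast
  let ?c = "ell fs" and ?x = "rpi fs"
  have xk: "?x \<in> ker_a" using fs(2) by (rule rpi_ker)
  define n where "n = length fs"
  define a where "a i = fst (fs ! i)" for i
  define w where "w i = Einv (W (fst (snd (fs ! i))) (snd (snd (fs ! i))))" for i
  have wJ: "w i \<in> J" for i by (simp add: w_def J_iff QP_W W_0)
  have "E (\<lambda>t. \<Sum>i<n. a i * conv xi (w i) t) = (\<Sum>i<n. fps_const (a i) * (fps_X * W (fst (snd (fs ! i))) (snd (snd (fs ! i)))))"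
    by (simp add: E_lincomb E_conv E_xi w_def)
  also have "\<dots> = sum_list (map (\<lambda>(c,k,m). fps_const c * (fps_X * W k m)) fs)"
    by (simp add: sum_list_sum_nth n_def a_def atLeast0LessThan case_prod_unfold)
  also have "\<dots> = E f - E (Theta ?c ?x)"
    by (simp add: W_sum fs(1) E_Theta E_P1_rpi)
  also have "\<dots> = E (\<lambda>n. f n - Theta ?c ?x n)" by (simp add: E_diff)
  finally have eq: "(\<lambda>n. f n - Theta ?c ?x n) = (\<lambda>t. \<Sum>i<n. a i * conv xi (w i) t)"
    by (metis E_inj)
  have inS: "\<forall>i<n. conv xi (w i) \<in> {conv f g | f g. f \<in> J \<and> g \<in> J}"
    using xi_J wJ by blast
  have "(\<lambda>n. f n - Theta ?c ?x n) \<in> J2" unfolding J2_def cspan_def eq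
    by (intro CollectI exI[of _ n] exI[of _ a] exI[of _ "\<lambda>i. conv xi (w i)"] conjI inS refl)
  then show ?thesis using xk by blast
qed

theorem lemma3p3:
  shows "(\<forall>c x. x \<in> ker_a \<longrightarrow> Theta c x \<in> J)
       \<and> (\<forall>c x. x \<in> ker_a \<longrightarrow> (Theta c x \<in> J2 \<longleftrightarrow> c = 0 \<and> x \<in> ker_a2))
       \<and> (\<forall>f\<in>J. \<exists>c x. x \<in> ker_a \<and> (\<lambda>n. f n - Theta c x n) \<in> J2)"
  using part1 part2a part2b part3 by blast

end
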